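(* There exists a character $\varepsilon:G_3\to\{1,-1\}$ such that $\varepsilon(g)=-1$ for every hexflection $g$ and $\varepsilon(-I)=-1$.
   Context: $\zeta=(-1+\sqrt{-3})/2$, $\mathcal{E}=\mathbb{Z}[\zeta]$. On $\mathbb{C}^4$, $h(a,b)=\bar a_1b_2+\bar a_2b_1-\bar a_3b_3-\bar a_4b_4$; $G_3=\{g\in\mathrm{GL}(4,\mathcal{E}):h(ga,gb)=h(a,b)\}$. For $b\in\mathcal{E}^4$ with $h(b,b)=-1$ and $\eta$ a primitive sixth root of unity, the hexflection along $b$ is $x\mapsto x-(1-\eta)\frac{h(b,x)}{h(b,b)}b$, an element of $G_3$ of order $6$ fixing the orthogonal complement of $b$ and sending $b$ to $\eta b$. *)

theory Defs
  imports "HOL-Analysis.Analysis"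
begin

definition zeta3 :: complex where
  "zeta3 = Complex (-1/2) (sqrt 3 / 2)"

definition Eis :: "complex set" where
  "Eis = {of_int a + of_int b * zeta3 | a b. True}"

definition herm :: "complex^4 \<Rightarrow> complex^4 \<Rightarrow> complex" where
  "herm a b = cnj (a$1) * b$2 + cnj (a$2) * b$1 - cnj (a$3) * b$3 - cnj (a$4) * b$4"

definition GL4E :: "(complex^4^4) set" where
  "GL4E = {g. (\<forall>i j. g$i$j \<in> Eis) \<and> invertible g \<and> (\<forall>i j. matrix_inv g $i$j \<in> Eis)}"

definition G3 :: "(complex^4^4) set" where
  "G3 = {g \<in> GL4E. \<forall>a b. herm (g *v a) (g *v b) = herm a b}"

definition primitive_sixth_root :: "complex \<Rightarrow> bool" where
  "primitive_sixth_root \<eta> \<longleftrightarrow> \<eta> ^ 6 = 1 \<and> (\<forall>k::nat. 0 < k \<and> k < 6 \<longrightarrow> \<eta> ^ k \<noteq> 1)"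

definition hexflection :: "complex^4^4 \<Rightarrow> bool" where
  "hexflection g \<longleftrightarrow> (\<exists>b \<eta>. (\<forall>i. b$i \<in> Eis) \<and> herm b b = -1 \<and> primitive_sixth_root \<eta> \<and>
      (\<forall>x. g *v x = x - ((1 - \<eta>) * herm b x / herm b b) *s b))"

end

theory Submission
  imports Defs "HOL-Combinatorics.Permutations"
begin

lemma zeta_sq: "zeta3 * zeta3 = -1 - zeta3"
  by (simp add: zeta3_def complex_eq_iff)

lemma zeta_cnj: "cnj zeta3 = -1 - zeta3"
  by (simp add: zeta3_def complex_eq_iff)

definition red :: "complex \<Rightarrow> int" where
 "red z = (\<lfloor>Re z + Im z / sqrt 3\<rfloor> + \<lfloor>2 * Im z / sqrt 3\<rfloor>) mod 3"

lemma red_ab: "red (of_int a + of_int b * zeta3) = (a + b) mod 3"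
proof -
  have h1: "Re (of_int a + of_int b * zeta3) + Im (of_int a + of_int b * zeta3) / sqrt 3 = of_int a"
    by (simp add: zeta3_def)
  have h2: "2 * Im (of_int a + of_int b * zeta3) / sqrt 3 = of_int b"
    by (simp add: zeta3_def)
  show ?thesis unfolding red_def h1 h2 by simp
qed

lemma EisE: "z \<in> Eis \<Longrightarrow> (\<And>a b. z = of_int a + of_int b * zeta3 \<Longrightarrow> P) \<Longrightarrow> P"
  unfolding Eis_def by blast

lemma EisI: "of_int a + of_int b * zeta3 \<in> Eis"
  unfolding Eis_def by blast

lemma mult_ab: "(of_int a + of_int b * zeta3) * (of_int c + of_int d * zeta3) =
   of_int (a*c - b*d) + of_int (a*d + b*c - b*d) * zeta3"
proof -
  have "(of_int a + of_int b * zeta3) * (of_int c + of_int d * zeta3) =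
     of_int a * of_int c + (of_int a * of_int d + of_int b * of_int c) * zeta3 + of_int b * of_int d * (zeta3 * zeta3)"
    by (simp add: algebra_simps)
  also have "\<dots> = of_int (a*c - b*d) + of_int (a*d + b*c - b*d) * zeta3"
    by (simp add: zeta_sq algebra_simps)
  finally show ?thesis .
qed

lemma Eis_add: "z \<in> Eis \<Longrightarrow> w \<in> Eis \<Longrightarrow> z + w \<in> Eis \<and> red (z + w) = (red z + red w) mod 3"
proof (elim EisE)
  fix a b c d assume z: "z = of_int a + of_int b * zeta3" and w: "w = of_int c + of_int d * zeta3"
  have e: "z + w = of_int (a+c) + of_int (b+d) * zeta3" unfolding z w by (simp add: algebra_simps)
  have "red (z + w) = (a+c+(b+d)) mod 3" unfolding e red_ab ..
  also have "\<dots> = ((a+b) mod 3 + (c+d) mod 3) mod 3" by presburger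
  also have "\<dots> = (red z + red w) mod 3" unfolding z w red_ab ..
  finally show ?thesis unfolding e using EisI by blast
qed

lemma Eis_mult: "z \<in> Eis \<Longrightarrow> w \<in> Eis \<Longrightarrow> z * w \<in> Eis \<and> red (z * w) = (red z * red w) mod 3"
proof (elim EisE)
  fix a b c d assume z: "z = of_int a + of_int b * zeta3" and w: "w = of_int c + of_int d * zeta3"
  have m: "(a*c - b*d + (a*d + b*c - b*d)) mod 3 = ((a+b)*(c+d)) mod 3"
  proof -
    have "(a+b)*(c+d) = (a*c + (a*d + b*c)) + b*d" by (simp add: algebra_simps)
    moreover have "(a*c - b*d + (a*d + b*c - b*d)) = (a*c + (a*d + b*c)) - 2*(b*d)" by simp
    moreover have "((x::int) - 2*y) mod 3 = (x + y) mod 3" for x y by presburger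
    ultimately show ?thesis by simp
  qed
  have "red (z * w) = ((a+b)*(c+d)) mod 3" unfolding z w mult_ab red_ab m ..
  also have "\<dots> = (red z * red w) mod 3" unfolding z w red_ab by (simp add: mod_simps)
  finally show ?thesis unfolding z w mult_ab using EisI by blast
qed

lemma Eis_neg: "z \<in> Eis \<Longrightarrow> - z \<in> Eis \<and> red (- z) = (- red z) mod 3"
proof (elim EisE)
  fix a b assume z: "z = of_int a + of_int b * zeta3"
  have e: "- z = of_int (-a) + of_int (-b) * zeta3" unfolding z by simp
  have "red (- z) = (- (a + b)) mod 3" unfolding e red_ab by simp
  also have "\<dots> = (- red z) mod 3" unfolding z red_ab by (simp add: mod_simps)
  finally show ?thesis using e EisI by metis
qed

lemma Eis_cnj: "z \<in> Eis \<Longrightarrow> cnj z \<in> Eis \<and> red (cnj z) = red z"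
proof (elim EisE)
  fix a b assume z: "z = of_int a + of_int b * zeta3"
  have c: "cnj z = of_int (a - b) + of_int (-b) * zeta3"
    unfolding z by (simp add: zeta_cnj algebra_simps)
  have m: "(a - b + - b) mod 3 = (a + b) mod 3"
    by presburger
  have "red (cnj z) = (a+b) mod 3" unfolding c red_ab m ..
  moreover have "red z = (a+b) mod 3" unfolding z red_ab ..
  ultimately show ?thesis using c EisI by metis
qed

lemma Eis_int: "of_int n \<in> Eis \<and> red (of_int n) = n mod 3"
  using EisI[of n 0] red_ab[of n 0] by simp

lemma Eis_zeta: "zeta3 \<in> Eis \<and> red zeta3 = 1"
  using EisI[of 0 1] red_ab[of 0 1] by simp

lemma Eis_diff: "z \<in> Eis \<Longrightarrow> w \<in> Eis \<Longrightarrow> z - w \<in> Eis \<and> red (z - w) = (red z - red w) mod 3"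
  using Eis_add[of z "-w"] Eis_neg[of w] by (simp add: mod_simps)

lemma red_range: "0 \<le> red z \<and> red z < 3"
  unfolding red_def by simp

lemma red_sum: "finite S \<Longrightarrow> (\<forall>i\<in>S. f i \<in> Eis) \<Longrightarrow> sum f S \<in> Eis \<and> red (sum f S) = (\<Sum>i\<in>S. red (f i)) mod 3"
proof (induction S rule: finite_induct)
  case empty
  then show ?case using Eis_int[of 0] by simp
next
  case (insert x F)
  then show ?case using Eis_add[of "f x" "sum f F"] by (simp add: mod_simps)
qed

definition EV :: "complex^4 \<Rightarrow> bool" where "EV x \<longleftrightarrow> (\<forall>i. x$i \<in> Eis)"
definition EM :: "complex^4^4 \<Rightarrow> bool" where "EM g \<longleftrightarrow> (\<forall>i j. g$i$j \<in> Eis)"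
definition redv :: "complex^4 \<Rightarrow> int^4" where "redv x = (\<chi> i. red (x$i))"
definition mv :: "int^4^4 \<Rightarrow> int^4 \<Rightarrow> int^4" where "mv A v = (\<chi> i. (\<Sum>j\<in>UNIV. A$i$j * v$j) mod 3)"
definition Mg :: "complex^4^4 \<Rightarrow> int^4^4" where "Mg g = (\<chi> i j. red (g$i$j))"

lemma L1: assumes "EM g" "EV x" shows "EV (g *v x) \<and> redv (g *v x) = mv (Mg g) (redv x)"
proof -
  have *: "(g *v x)$i \<in> Eis \<and> red ((g *v x)$i) = (\<Sum>j\<in>UNIV. red (g$i$j) * red (x$j)) mod 3" for i
  proof -
    have e: "(g *v x)$i = (\<Sum>j\<in>UNIV. g$i$j * x$j)" by (simp add: matrix_vector_mult_def)
    have m: "\<forall>j\<in>UNIV. g$i$j * x$j \<in> Eis \<and> red (g$i$j * x$j) = (red (g$i$j) * red (x$j)) mod 3"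
      using assms Eis_mult unfolding EM_def EV_def by blast
    have "red ((g *v x)$i) = (\<Sum>j\<in>UNIV. red (g$i$j * x$j)) mod 3"
      unfolding e using red_sum[of UNIV "\<lambda>j. g$i$j * x$j"] m by simp
    also have "\<dots> = (\<Sum>j\<in>UNIV. (red (g$i$j) * red (x$j)) mod 3) mod 3"
      using m by simp
    also have "\<dots> = (\<Sum>j\<in>UNIV. red (g$i$j) * red (x$j)) mod 3" by (simp add: mod_sum_eq)
    finally show ?thesis unfolding e using red_sum[of UNIV "\<lambda>j. g$i$j * x$j"] m by simp
  qed
  show ?thesis using * unfolding EV_def redv_def mv_def Mg_def by (simp add: vec_eq_iff)
qed

lemma EM_mult: "EM g \<Longrightarrow> EM h \<Longrightarrow> EM (g ** h)"
proof -
  assume g: "EM g" and h: "EM h"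
  have "(\<Sum>k\<in>UNIV. g $ i $ k * h $ k $ j) \<in> Eis" for i j
    using red_sum[of UNIV "\<lambda>k. g $ i $ k * h $ k $ j"] Eis_mult g h unfolding EM_def by simp
  thus ?thesis unfolding EM_def matrix_matrix_mult_def by simp
qed

type_synonym t4 = "int \<times> int \<times> int \<times> int"

definition tv :: "int^4 \<Rightarrow> t4" where "tv v = (v$1, v$2, v$3, v$4)"
definition vt :: "t4 \<Rightarrow> int^4" where
  "vt t = (case t of (a,b,c,d) \<Rightarrow> (\<chi> i. if i = 1 then a else if i = 2 then b else if i = 3 then c else d))"

lemma tv_vt[simp]: "tv (vt t) = t"
  by (cases t) (simp add: tv_def vt_def)

lemma vt_tv[simp]: "vt (tv v) = v"
  unfolding vec_eq_iff tv_def vt_def by (simp add: forall_4)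

fun Bt :: "t4 \<Rightarrow> t4 \<Rightarrow> int" where
 "Bt (a,b,c,d) (x,y,z,w) = b*x + a*y - c*z - d*w"

fun Qt :: "t4 \<Rightarrow> int" where "Qt (a,b,c,d) = (2*a*b - c*c - d*d) mod 3"

lemma red_herm: assumes "EV x" "EV y"
  shows "herm x y \<in> Eis \<and> red (herm x y) = Bt (tv (redv x)) (tv (redv y)) mod 3"
proof -
  have x: "x$i \<in> Eis" "cnj (x$i) \<in> Eis" "red (cnj (x$i)) = red (x$i)" for i
    using assms Eis_cnj unfolding EV_def by auto
  have y: "y$i \<in> Eis" for i using assms unfolding EV_def by auto
  have p: "cnj (x$i) * y$j \<in> Eis \<and> red (cnj (x$i) * y$j) = (red (x$i) * red (y$j)) mod 3" for i j
    using Eis_mult[OF x(2) y, of i j] x(3) by simp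
  let ?p = "\<lambda>i j. cnj (x$i) * y$j"
  have s1: "?p 1 2 + ?p 2 1 \<in> Eis \<and> red (?p 1 2 + ?p 2 1) = (red (?p 1 2) + red (?p 2 1)) mod 3"
    using Eis_add p by blast
  have s2: "?p 1 2 + ?p 2 1 - ?p 3 3 \<in> Eis \<and> red (?p 1 2 + ?p 2 1 - ?p 3 3) = (red (?p 1 2 + ?p 2 1) - red (?p 3 3)) mod 3"
    using Eis_diff s1 p by blast
  have s3: "?p 1 2 + ?p 2 1 - ?p 3 3 - ?p 4 4 \<in> Eis \<and> red (?p 1 2 + ?p 2 1 - ?p 3 3 - ?p 4 4) = (red (?p 1 2 + ?p 2 1 - ?p 3 3) - red (?p 4 4)) mod 3"
    using Eis_diff s2 p by blast
  have h: "herm x y = ?p 1 2 + ?p 2 1 - ?p 3 3 - ?p 4 4" unfolding herm_def by simp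
  have H: "(((p mod 3 + q mod 3) mod 3 - r mod 3) mod 3 - s mod 3) mod 3 = (p+q-r-s) mod (3::int)" for p q r s
    by (simp add: mod_simps)
  have "red (herm x y) = ((((red(?p 1 2) + red(?p 2 1)) mod 3 - red(?p 3 3)) mod 3) - red(?p 4 4)) mod 3"
    unfolding h s3[THEN conjunct2] s2[THEN conjunct2] s1[THEN conjunct2] ..
  also have "\<dots> = (red (x$1) * red (y$2) + red (x$2) * red (y$1) - red (x$3) * red (y$3) - red (x$4) * red (y$4)) mod 3"
    unfolding p[THEN conjunct2] H ..
  also have "\<dots> = Bt (tv (redv x)) (tv (redv y)) mod 3"
    by (simp add: redv_def tv_def algebra_simps)
  finally show ?thesis using s3 h by simp
qed

lemma Qt_Bt: "Qt t = Bt t t mod 3"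
  by (cases t) (simp add: algebra_simps)

definition all81 :: "t4 list" where
 "all81 = [(a,b,c,d). a \<leftarrow> [0,1,2], b \<leftarrow> [0,1,2], c \<leftarrow> [0,1,2], d \<leftarrow> [0,1,2]]"

lemma set81: "set all81 = {0,1,2} \<times> {0,1,2} \<times> {0,1,2} \<times> {0,1,2}"
  unfolding all81_def by auto

lemma int3: "(a::int) \<in> {0,1,2} \<longleftrightarrow> 0 \<le> a \<and> a < 3" by auto

lemma in81: "(a,b,c,d) \<in> set all81 \<longleftrightarrow> (0 \<le> a \<and> a < 3) \<and> (0 \<le> b \<and> b < 3) \<and> (0 \<le> c \<and> c < 3) \<and> (0 \<le> d \<and> d < 3)"
  unfolding set81 mem_Times_iff int3 by simp

definition lift :: "t4 \<Rightarrow> complex^4" where "lift t = (\<chi> j. of_int (vt t $ j))"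

lemma EV_lift: "EV (lift t)"
  unfolding EV_def lift_def using Eis_int by simp

lemma redv_lift: "t \<in> set all81 \<Longrightarrow> redv (lift t) = vt t"
  unfolding redv_def lift_def vec_eq_iff using Eis_int
  by (cases t) (auto simp: in81 vt_def forall_4)

definition actt :: "complex^4^4 \<Rightarrow> t4 \<Rightarrow> t4" where "actt g t = tv (mv (Mg g) (vt t))"

lemma actt_lift: "EM g \<Longrightarrow> t \<in> set all81 \<Longrightarrow> actt g t = tv (redv (g *v lift t))"
  unfolding actt_def using L1[OF _ EV_lift] redv_lift by simp

lemma actt_range: "actt g t \<in> set all81"
  unfolding actt_def tv_def mv_def by (simp add: in81)

lemma actt_mult: assumes "EM g" "EM h" "t \<in> set all81"
  shows "actt (g ** h) t = actt g (actt h t)"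
proof -
  have "actt g (actt h t) = actt g (tv (redv (h *v lift t)))"
    using actt_lift[OF assms(2,3)] by simp
  also have "\<dots> = tv (mv (Mg g) (redv (h *v lift t)))"
    unfolding actt_def by simp
  also have "\<dots> = tv (redv (g *v (h *v lift t)))"
    using L1[OF assms(2) EV_lift] L1[OF assms(1)] by simp
  also have "\<dots> = actt (g ** h) t"
    using actt_lift[OF EM_mult[OF assms(1,2)] assms(3)] by (simp add: matrix_vector_mul_assoc)
  finally show ?thesis by simp
qed

lemma Qt_red: "EV x \<Longrightarrow> Qt (tv (redv x)) = red (herm x x)"
  using red_herm[of x x] Qt_Bt by simp

lemma invol_permutation: "finite {x. p x \<noteq> x} \<Longrightarrow> (\<forall>x. p (p x) = x) \<Longrightarrow> permutation p"
proof -
  assume f: "finite {x. p x \<noteq> x}" and i: "\<forall>x. p (p x) = x"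
  have "p \<circ> p = id" using i by (simp add: fun_eq_iff)
  then have "bij p" using o_bij by blast
  then show ?thesis unfolding permutation using f by simp
qed

lemma sign_invol:
  "finite {x. p x \<noteq> x} \<Longrightarrow> (\<forall>x. p (p x) = x) \<Longrightarrow> sign p = (-1) ^ (card {x. p x \<noteq> x} div 2)"
proof (induction "card {x. p x \<noteq> x}" arbitrary: p rule: less_induct)
  case less
  show ?case
  proof (cases "{x. p x \<noteq> x} = {}")
    case True
    then have "p = id" by auto
    then show ?thesis using True by simp
  next
    case False
    then obtain a where a: "p a \<noteq> a" by auto
    define b where "b = p a"
    have pb: "p b = a" using less.prems b_def by simp
    define q where "q = Transposition.transpose a b \<circ> p"
    have qa: "q a = a" unfolding q_def b_def by simp
    have qb: "q b = b" unfolding q_def using pb by simp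
    have qx: "q x = p x" if "x \<noteq> a" "x \<noteq> b" for x
    proof -
      have "p x \<noteq> a" using that pb less.prems by metis
      moreover have "p x \<noteq> b" using that less.prems b_def by metis
      ultimately show ?thesis unfolding q_def by simp
    qed
    have ab: "a \<noteq> b" using a b_def by simp
    have M': "q x \<noteq> x \<longleftrightarrow> p x \<noteq> x \<and> x \<noteq> a \<and> x \<noteq> b" for x
      using qa qb qx[of x] by (cases "x = a \<or> x = b") auto
    have M: "{x. q x \<noteq> x} = {x. p x \<noteq> x} - {a, b}"
      using M' by auto
    have inv: "\<forall>x. q (q x) = x"
    proof
      fix x show "q (q x) = x"
      proof (cases "x = a \<or> x = b")
        case True then show ?thesis using qa qb by auto
      next
        case False
        then have "p x \<noteq> a" "p x \<noteq> b" using pb less.prems b_def by metis+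
        then show ?thesis using False qx less.prems by simp
      qed
    qed
    have ain: "a \<in> {x. p x \<noteq> x}" and bin: "b \<in> {x. p x \<noteq> x}" using a pb ab by auto
    have cardq: "card {x. q x \<noteq> x} = card {x. p x \<noteq> x} - 2"
      unfolding M using less.prems(1) ain bin ab by (simp add: card_Diff_subset)
    have c2: "card {x. p x \<noteq> x} \<ge> 2"
    proof -
      have "{a, b} \<subseteq> {x. p x \<noteq> x}" using ain bin by auto
      from card_mono[OF less.prems(1) this] show ?thesis using ab by simp
    qed
    have finq: "finite {x. q x \<noteq> x}" unfolding M using less.prems(1) by simp
    have IH: "sign q = (-1) ^ (card {x. q x \<noteq> x} div 2)"
      using less.hyps[of q] cardq c2 finq inv by simp
    have pq: "p = Transposition.transpose a b \<circ> q" unfolding q_def by (simp add: fun_eq_iff)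
    have "sign p = sign (Transposition.transpose a b) * sign q"
      unfolding pq by (rule sign_compose[OF permutation_swap_id invol_permutation[OF finq inv]])
    also have "\<dots> = - ((-1) ^ ((card {x. p x \<noteq> x} - 2) div 2))"
      using ab IH cardq by (simp add: sign_swap_id)
    also have "\<dots> = (-1) ^ (card {x. p x \<noteq> x} div 2)"
    proof -
      obtain m where m: "card {x. p x \<noteq> x} = m + 2" using c2 le_Suc_ex by (metis add.commute)
      show ?thesis unfolding m by simp
    qed
    finally show ?thesis .
  qed
qed

definition XL :: "t4 list" where "XL = filter (\<lambda>t. Qt t = 2) all81"

lemma XL_mem: "t \<in> set XL \<longleftrightarrow> t \<in> set all81 \<and> Qt t = 2"
  unfolding XL_def by simp

fun reflt :: "t4 \<Rightarrow> t4 \<Rightarrow> t4" where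
 "reflt (a,b,c,d) (x,y,z,w) = (let k = 2 * Bt (a,b,c,d) (x,y,z,w) in
    ((x + k*a) mod 3, (y + k*b) mod 3, (z + k*c) mod 3, (w + k*d) mod 3))"

fun negt :: "t4 \<Rightarrow> t4" where
 "negt (x,y,z,w) = ((2*x) mod 3, (2*y) mod 3, (2*z) mod 3, (2*w) mod 3)"

lemma XL_facts: "distinct XL \<and> length XL = 30"
  by code_simp

lemma neg_facts: "\<forall>t\<in>set XL. negt t \<in> set XL \<and> negt t \<noteq> t \<and> negt (negt t) = t"
  by code_simp

lemma refl_facts: "\<forall>b\<in>set XL. (\<forall>t\<in>set XL. reflt b t \<in> set XL \<and> reflt b (reflt b t) = t) \<and> length (filter (\<lambda>t. reflt b t \<noteq> t) XL) = 18"
  by code_simp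

lemma G3_facts: assumes "g \<in> G3"
  shows "EM g \<and> EM (matrix_inv g) \<and> matrix_inv g ** g = mat 1 \<and> (\<forall>a b. herm (g *v a) (g *v b) = herm a b)"
proof -
  have gl: "g \<in> GL4E" and h: "\<forall>a b. herm (g *v a) (g *v b) = herm a b" using assms unfolding G3_def by auto
  have inv: "invertible g" using gl unfolding GL4E_def by auto
  have "g ** matrix_inv g = mat 1 \<and> matrix_inv g ** g = mat 1"
    using inv unfolding matrix_inv_def invertible_def by (rule someI_ex)
  then show ?thesis using gl h unfolding GL4E_def EM_def by auto
qed

lemma EM_id: "EM (mat 1)"
  unfolding EM_def mat_def using Eis_int[of 1] Eis_int[of 0] by simp

lemma actt_id: "t \<in> set all81 \<Longrightarrow> actt (mat 1) t = t"
  using actt_lift[OF EM_id] redv_lift by simp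

definition permg :: "complex^4^4 \<Rightarrow> t4 \<Rightarrow> t4" where
  "permg g = (\<lambda>t. if t \<in> set XL then actt g t else t)"

lemma actt_XL: assumes "g \<in> G3" "t \<in> set XL" shows "actt g t \<in> set XL"
proof -
  have t: "t \<in> set all81" "Qt t = 2" using assms(2) XL_mem by auto
  have em: "EM g" and h: "\<forall>a b. herm (g *v a) (g *v b) = herm a b" using G3_facts[OF assms(1)] by auto
  have "Qt (actt g t) = Qt (tv (redv (g *v lift t)))" using actt_lift[OF em t(1)] by simp
  also have "\<dots> = red (herm (g *v lift t) (g *v lift t))" by (rule Qt_red[OF L1[OF em EV_lift, THEN conjunct1]])
  also have "\<dots> = red (herm (lift t) (lift t))" using h by simp
  also have "\<dots> = Qt (tv (redv (lift t)))" using Qt_red[OF EV_lift] by simp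
  also have "\<dots> = Qt t" using redv_lift[OF t(1)] by simp
  finally show ?thesis using t actt_range XL_mem by simp
qed

lemma permg_perm: assumes "g \<in> G3" shows "permutation (permg g)"
proof -
  let ?X = "set XL"
  have G: "EM g" "EM (matrix_inv g)" "matrix_inv g ** g = mat 1" using G3_facts[OF assms] by auto
  have bk: "actt (matrix_inv g) (actt g t) = t" if "t \<in> ?X" for t
  proof -
    have t: "t \<in> set all81" using that XL_mem by auto
    have "actt (matrix_inv g) (actt g t) = actt (matrix_inv g ** g) t"
      using actt_mult[OF G(2) G(1) t] by simp
    also have "\<dots> = t" using G(3) actt_id[OF t] by simp
    finally show ?thesis .
  qed
  have inj: "inj_on (actt g) ?X"
  proof (rule inj_onI)
    fix s t assume "s \<in> ?X" "t \<in> ?X" "actt g s = actt g t"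
    then show "s = t" using bk by metis
  qed
  have sub: "actt g ` ?X \<subseteq> ?X" using actt_XL[OF assms] by auto
  have img: "actt g ` ?X = ?X" using endo_inj_surj[OF _ sub inj] by simp
  have inj2: "inj_on (permg g) ?X" using inj unfolding permg_def inj_on_def by auto
  have img2: "permg g ` ?X = ?X" using img unfolding permg_def by auto
  have "bij_betw (permg g) ?X ?X" using inj2 img2 by (rule bij_betw_imageI)
  then have "permg g permutes ?X" by (rule bij_imp_permutes) (simp add: permg_def)
  then show ?thesis unfolding permutation_permutes by blast
qed

lemma permg_mult: assumes "g \<in> G3" "h \<in> G3" shows "permg (g ** h) = permg g \<circ> permg h"
proof
  fix t
  show "permg (g ** h) t = (permg g \<circ> permg h) t"
  proof (cases "t \<in> set XL")
    case True
    have t: "t \<in> set all81" using True XL_mem by auto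
    have "actt (g ** h) t = actt g (actt h t)"
      using actt_mult G3_facts[OF assms(1)] G3_facts[OF assms(2)] t by blast
    then show ?thesis using True actt_XL[OF assms(2) True] unfolding permg_def by simp
  next
    case False
    then show ?thesis unfolding permg_def by simp
  qed
qed

lemma sign_permg_neg: "sign (permg (- mat 1)) = -1"
proof -
  have r: "red (- (mat 1 $ i $ j)) = (if i = j then 2 else 0)" for i j
    using Eis_int[of "-1"] Eis_int[of 0] unfolding mat_def by simp
  have a: "actt (- mat 1) t = negt t" for t
    by (cases t) (simp add: actt_def tv_def mv_def Mg_def sum_4 vt_def r)
  have p: "permg (- mat 1) = (\<lambda>t. if t \<in> set XL then negt t else t)"
    unfolding permg_def a ..
  have M: "{t. permg (- mat 1) t \<noteq> t} = set XL" unfolding p using neg_facts by auto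
  have inv: "\<forall>t. permg (- mat 1) (permg (- mat 1) t) = t" unfolding p using neg_facts by auto
  have c: "card (set XL) = 30" using XL_facts distinct_card by metis
  have fin: "finite {t. permg (- mat 1) t \<noteq> t}" unfolding M by simp
  have "sign (permg (- mat 1)) = (-1) ^ (card {t. permg (- mat 1) t \<noteq> t} div 2)"
    by (rule sign_invol[OF fin inv])
  also have "\<dots> = (-1) ^ 15" unfolding M c by simp
  finally show ?thesis by simp
qed

lemma eta_cases: assumes "primitive_sixth_root \<eta>" shows "\<eta> = 1 + zeta3 \<or> \<eta> = - zeta3"
proof -
  have e6: "\<eta>^6 = 1" and e2: "\<eta>^2 \<noteq> 1" and e3: "\<eta>^3 \<noteq> 1"
    using assms unfolding primitive_sixth_root_def by auto
  have f1: "(w - 1)*(w + 1) = w*w - (1::complex)" for w by (simp add: algebra_simps)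
  have f2: "(w + 1)*(w*w - w + 1) = w*w*w + (1::complex)" for w by (simp add: algebra_simps)
  have f3: "(w - (1 + z))*(w + z) = w*w - w - z - z*z" for w z :: complex by (simp add: algebra_simps)
  have p6: "\<eta>^3 * \<eta>^3 = \<eta>^6" by (simp only: power_add[symmetric]) simp
  have "(\<eta>^3 - 1) * (\<eta>^3 + 1) = 0" unfolding f1 p6 e6 by simp
  then have c3: "\<eta>^3 + 1 = 0" using e3 by simp
  have "\<eta> + 1 \<noteq> 0"
  proof
    assume "\<eta> + 1 = 0" then have "\<eta> = -1" using eq_neg_iff_add_eq_0 by blast
    then show False using e2 by simp
  qed
  moreover have "(\<eta> + 1) * (\<eta> * \<eta> - \<eta> + 1) = 0" unfolding f2 using c3 by (simp add: power3_eq_cube)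
  ultimately have q: "\<eta> * \<eta> - \<eta> + 1 = 0" by simp
  have "(\<eta> - (1 + zeta3)) * (\<eta> + zeta3) = \<eta> * \<eta> - \<eta> + 1" unfolding f3 zeta_sq by simp
  then have "(\<eta> - (1 + zeta3)) * (\<eta> + zeta3) = 0" using q by simp
  then have "\<eta> - (1 + zeta3) = 0 \<or> \<eta> + zeta3 = 0" by simp
  then show ?thesis using eq_neg_iff_add_eq_0 by (metis right_minus_eq)
qed

lemma eta_red: assumes "primitive_sixth_root \<eta>" shows "1 - \<eta> \<in> Eis \<and> red (1 - \<eta>) = 2"
proof (cases "\<eta> = 1 + zeta3")
  case True
  have e: "1 - \<eta> = of_int 0 + of_int (-1) * zeta3" using True by simp
  have "1 - \<eta> \<in> Eis" unfolding e by (rule EisI)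
  moreover have "red (1 - \<eta>) = 2" unfolding e red_ab by simp
  ultimately show ?thesis by simp
next
  case False
  then have "\<eta> = - zeta3" using eta_cases[OF assms] by simp
  then have e: "1 - \<eta> = of_int 1 + of_int 1 * zeta3" by simp
  have "1 - \<eta> \<in> Eis" unfolding e by (rule EisI)
  moreover have "red (1 - \<eta>) = 2" unfolding e red_ab by simp
  ultimately show ?thesis by simp
qed

lemma reflt_vec: "reflt bt t = tv (\<chi> i. (vt t $ i + 2 * Bt bt t * vt bt $ i) mod 3)"
  by (cases bt; cases t) (simp add: tv_def vt_def Let_def del: Bt.simps)

lemma sign_permg_hex: assumes "g \<in> G3" "hexflection g" shows "sign (permg g) = -1"
proof -
  obtain b \<eta> where b: "\<forall>i. b$i \<in> Eis" and hb: "herm b b = -1" and eta: "primitive_sixth_root \<eta>"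
    and gx: "\<forall>x. g *v x = x - ((1 - \<eta>) * herm b x / herm b b) *s b"
    using assms(2) unfolding hexflection_def by blast
  have EVb: "EV b" using b unfolding EV_def by simp
  have em: "EM g" using G3_facts[OF assms(1)] by simp
  define bt where "bt = tv (redv b)"
  have bt81: "bt \<in> set all81" unfolding bt_def tv_def redv_def by (simp add: in81 red_range)
  have "Qt bt = red (herm b b)" unfolding bt_def using Qt_red[OF EVb] .
  also have "\<dots> = 2" using hb Eis_int[of "-1"] by simp
  finally have btX: "bt \<in> set XL" using bt81 XL_mem by simp
  have vtbt: "vt bt $ i = red (b$i)" for i unfolding bt_def redv_def by simp
  have act: "actt g t = reflt bt t" if tX: "t \<in> set XL" for t
  proof -
    have t: "t \<in> set all81" using tX XL_mem by simp
    let ?x = "lift t"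
    define c where "c = (1 - \<eta>) * herm b ?x"
    have hc: "herm b ?x \<in> Eis \<and> red (herm b ?x) = Bt bt t mod 3"
      using red_herm[OF EVb EV_lift] redv_lift[OF t] unfolding bt_def by simp
    have cE: "c \<in> Eis \<and> red c = (2 * (Bt bt t mod 3)) mod 3"
      unfolding c_def using Eis_mult[of "1 - \<eta>" "herm b ?x"] eta_red[OF eta] hc by simp
    have comp: "(g *v ?x) $ i = ?x $ i + c * b $ i" for i
      using gx hb unfolding c_def by simp
    have xE: "?x $ i \<in> Eis" "red (?x $ i) = vt t $ i" for i
      using EV_lift redv_lift[OF t] unfolding EV_def redv_def by (auto simp: vec_eq_iff)
    have rc: "red ((g *v ?x) $ i) = (vt t $ i + 2 * Bt bt t * vt bt $ i) mod 3" for i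
    proof -
      have cb: "c * b$i \<in> Eis \<and> red (c * b$i) = (red c * red (b$i)) mod 3"
        using Eis_mult cE b by blast
      have "red ((g *v ?x) $ i) = (red (?x $ i) + red (c * b $ i)) mod 3"
        unfolding comp using Eis_add xE(1) cb by blast
      also have "\<dots> = (vt t $ i + (red c * red (b $ i)) mod 3) mod 3"
        using cb xE(2) by simp
      also have "\<dots> = (vt t $ i + 2 * Bt bt t * vt bt $ i) mod 3"
        unfolding cE[THEN conjunct2] vtbt by (simp add: mod_simps)
      finally show ?thesis .
    qed
    have "actt g t = tv (redv (g *v ?x))" using actt_lift[OF em t] .
    also have "\<dots> = reflt bt t" unfolding reflt_vec redv_def rc ..
    finally show ?thesis .
  qed
  have p: "permg g = (\<lambda>t. if t \<in> set XL then reflt bt t else t)"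
    unfolding permg_def using act by auto
  have rf: "\<forall>t\<in>set XL. reflt bt t \<in> set XL \<and> reflt bt (reflt bt t) = t"
    and len: "length (filter (\<lambda>t. reflt bt t \<noteq> t) XL) = 18"
    using refl_facts btX by auto
  have M: "{t. permg g t \<noteq> t} = set (filter (\<lambda>t. reflt bt t \<noteq> t) XL)" unfolding p by auto
  have inv: "\<forall>t. permg g (permg g t) = t" unfolding p using rf by auto
  have d: "distinct XL" using XL_facts by simp
  have c: "card {t. permg g t \<noteq> t} = 18"
    unfolding M distinct_card[OF distinct_filter[OF d]] len ..
  have fin: "finite {t. permg g t \<noteq> t}" unfolding M by simp
  have "sign (permg g) = (-1) ^ (card {t. permg g t \<noteq> t} div 2)"
    by (rule sign_invol[OF fin inv])
  also have "\<dots> = (-1) ^ 9" unfolding c by simp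
  finally show ?thesis by simp
qed

theorem lemma8p6:
  shows "\<exists>\<epsilon> :: complex^4^4 \<Rightarrow> int.
           (\<forall>g\<in>G3. \<epsilon> g \<in> {1, -1}) \<and>
           (\<forall>g\<in>G3. \<forall>h\<in>G3. \<epsilon> (g ** h) = \<epsilon> g * \<epsilon> h) \<and>
           (\<forall>g\<in>G3. hexflection g \<longrightarrow> \<epsilon> g = -1) \<and>
           \<epsilon> (- mat 1) = -1"
proof (intro exI[of _ "\<lambda>g. sign (permg g)"] conjI ballI impI)
  fix g assume "g \<in> G3" then show "sign (permg g) \<in> {1, -1}" by (simp add: sign_def)
next
  fix g h assume "g \<in> G3" "h \<in> G3"
  then show "sign (permg (g ** h)) = sign (permg g) * sign (permg h)"
    unfolding permg_mult[OF \<open>g \<in> G3\<close> \<open>h \<in> G3\<close>]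
    by (rule sign_compose[OF permg_perm permg_perm])
next
  fix g assume "g \<in> G3" "hexflection g" then show "sign (permg g) = -1" by (rule sign_permg_hex)
next
  show "sign (permg (- mat 1)) = -1" by (rule sign_permg_neg)
qed

end
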